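(* Let $\theta\in(\pi/3,\pi/2)$ and define \[ \zeta=\zeta(\theta)=-\frac{1}{2\cos\theta},\qquad z=z(\theta)=\frac{2\cos\theta}{\sqrt{(1-4\cos^2\theta)^3}}. \] Then the three zeros in $t$ of $1+t^2+z(\theta)t^3$ are \[ t_0=-\frac{e^{-i\theta}}{z(2\cos\theta+\zeta)},\qquad t_1=t_0e^{2i\theta},\qquad t_2=\zeta e^{i\theta}t_0. \] *)

theory Defs
  imports Complex_Main
begin

definition zeta :: "real \<Rightarrow> real" where
  "zeta \<theta> = - 1 / (2 * cos \<theta>)"

definition zz :: "real \<Rightarrow> real" where
  "zz \<theta> = 2 * cos \<theta> / sqrt ((1 - 4 * (cos \<theta>)^2) ^ 3)"

definition t0 :: "real \<Rightarrow> complex" where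
  "t0 \<theta> = - cis (- \<theta>) / complex_of_real (zz \<theta> * (2 * cos \<theta> + zeta \<theta>))"

definition t1 :: "real \<Rightarrow> complex" where
  "t1 \<theta> = t0 \<theta> * cis (2 * \<theta>)"

definition t2 :: "real \<Rightarrow> complex" where
  "t2 \<theta> = complex_of_real (zeta \<theta>) * cis \<theta> * t0 \<theta>"

end

theory Submission
  imports Defs
begin

theorem lemma3p3:
  fixes \<theta> :: real
  assumes "pi / 3 < \<theta>" and "\<theta> < pi / 2"
  shows "{t :: complex. 1 + t^2 + complex_of_real (zz \<theta>) * t^3 = 0} = {t0 \<theta>, t1 \<theta>, t2 \<theta>}
     \<and> (\<forall>t :: complex. 1 + t^2 + complex_of_real (zz \<theta>) * t^3
            = complex_of_real (zz \<theta>) * (t - t0 \<theta>) * (t - t1 \<theta>) * (t - t2 \<theta>))"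
proof -
  define c where "c = cos \<theta>"
  define D where "D = sqrt (1 - 4 * c^2)"
  have cpos: "c > 0" unfolding c_def using assms
    by (intro cos_gt_zero_pi) (auto simp: field_simps)
  have "cos \<theta> < cos (pi/3)" using assms
    by (intro cos_monotone_0_pi) auto
  hence chalf: "c < 1/2" by (simp add: c_def cos_60)
  have pos: "1 - 4 * c^2 > 0"
  proof -
    have "c^2 < (1/2)^2" using cpos chalf by (intro power_strict_mono) auto
    thus ?thesis by (simp add: power2_eq_square)
  qed
  have Dpos: "D > 0" unfolding D_def using pos by simp
  have D2: "D^2 = 1 - 4*c^2" unfolding D_def using pos by simp
  have D3: "sqrt ((1 - 4 * c^2)^3) = D^3" unfolding D_def
    by (simp add: real_sqrt_power)
  have zdef: "zz \<theta> = 2*c / D^3" unfolding zz_def c_def[symmetric] D3 by simp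
  have zpos: "zz \<theta> > 0" using zdef cpos Dpos by simp
  have key: "zz \<theta> * (2 * cos \<theta> + zeta \<theta>) = - 1 / D"
  proof -
    have "zz \<theta> * (2 * cos \<theta> + zeta \<theta>) = 2*c/D^3 * ((4*c^2 - 1)/(2*c))"
      unfolding zdef zeta_def c_def[symmetric] using cpos by (simp add: field_simps power2_eq_square)
    also have "\<dots> = 2*c/D^3 * (- (D^2)/(2*c))" using D2 by simp
    also have "\<dots> = -1/D" using cpos Dpos by (simp add: field_simps power3_eq_cube power2_eq_square)
    finally show ?thesis .
  qed
  have e0: "t0 \<theta> = of_real D * cis (-\<theta>)"
    unfolding t0_def key using Dpos by (simp add: field_simps)
  have e1: "t1 \<theta> = of_real D * cis \<theta>"
    unfolding t1_def e0 by (simp add: mult.assoc cis_mult)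
  have e2: "t2 \<theta> = of_real (- D / (2*c))"
    unfolding t2_def e0 zeta_def c_def[symmetric]
    by (simp add: mult.assoc cis_mult mult.commute)
  have sumc: "cis (-\<theta>) + cis \<theta> = of_real (2*c)"
    by (simp add: complex_eq_iff c_def)
  have prodc: "cis (-\<theta>) * cis \<theta> = 1" by (simp add: cis_mult)
  have zD3: "zz \<theta> * D^3 = 2*c" using zdef Dpos by simp
  have fact: "\<forall>t :: complex. 1 + t^2 + complex_of_real (zz \<theta>) * t^3
            = complex_of_real (zz \<theta>) * (t - t0 \<theta>) * (t - t1 \<theta>) * (t - t2 \<theta>)"
  proof
    fix t :: complex
    have q: "(t - t0 \<theta>) * (t - t1 \<theta>) = t^2 - of_real (2*c*D) * t + of_real (D^2)"
    proof -
      have "(t - t0 \<theta>) * (t - t1 \<theta>) = t^2 - of_real D * (cis (-\<theta>) + cis \<theta>) * t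
              + of_real D * of_real D * (cis (-\<theta>) * cis \<theta>)"
        unfolding e0 e1 by (simp add: algebra_simps power2_eq_square)
      thus ?thesis unfolding sumc prodc by (simp add: algebra_simps power2_eq_square)
    qed
    have r1: "zz \<theta> * (D/(2*c) - 2*c*D) = 1"
    proof -
      have "zz \<theta> * (D/(2*c) - 2*c*D) = zz \<theta> * (D * (1 - 4*c^2) / (2*c))"
        using cpos by (simp add: field_simps power2_eq_square)
      also have "\<dots> = zz \<theta> * D^3 / (2*c)" unfolding D2[symmetric]
        by (simp add: power2_eq_square power3_eq_cube)
      finally show ?thesis using zD3 cpos zpos Dpos by simp
    qed
    have r2: "zz \<theta> * (D^2 * (D/(2*c))) = 1"
    proof -
      have "zz \<theta> * (D^2 * (D/(2*c))) = zz \<theta> * D^3 / (2*c)"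
        by (simp add: power2_eq_square power3_eq_cube)
      thus ?thesis using zD3 cpos zpos Dpos by simp
    qed
    have "complex_of_real (zz \<theta>) * (t - t0 \<theta>) * (t - t1 \<theta>) * (t - t2 \<theta>)
       = of_real (zz \<theta>) * t^3 + of_real (zz \<theta> * (D/(2*c) - 2*c*D)) * t^2
         + of_real (zz \<theta> * (D^2 - 2*c*D*(D/(2*c)))) * t + of_real (zz \<theta> * (D^2 * (D/(2*c))))"
    proof -
      define a where "a = D/(2*c)"
      have "complex_of_real (zz \<theta>) * (t - t0 \<theta>) * (t - t1 \<theta>) * (t - t2 \<theta>)
        = of_real (zz \<theta>) * (t^2 - of_real (2*c*D) * t + of_real (D^2)) * (t + of_real a)"
        unfolding mult.assoc[of "complex_of_real (zz \<theta>)"] q e2 a_def by simp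
      also have "\<dots> = of_real (zz \<theta>) * t^3 + of_real (zz \<theta> * (a - 2*c*D)) * t^2
         + of_real (zz \<theta> * (D^2 - 2*c*D*a)) * t + of_real (zz \<theta> * (D^2 * a))"
        by (simp add: algebra_simps power2_eq_square power3_eq_cube)
      finally show ?thesis unfolding a_def .
    qed
    also have "D^2 - 2*c*D*(D/(2*c)) = 0" using cpos by (simp add: power2_eq_square)
    finally show "1 + t^2 + complex_of_real (zz \<theta>) * t^3
            = complex_of_real (zz \<theta>) * (t - t0 \<theta>) * (t - t1 \<theta>) * (t - t2 \<theta>)"
      unfolding r1 r2 by simp
  qed
  have "{t :: complex. 1 + t^2 + complex_of_real (zz \<theta>) * t^3 = 0} = {t0 \<theta>, t1 \<theta>, t2 \<theta>}"
    using fact zpos by auto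
  with fact show ?thesis by blast
qed

end
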